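(* Let $(\alpha_j)_{j\in\mathbb N}$, $(\beta_j)_{j\in\mathbb N}$, $(\sigma_j)_{j\in\mathbb N}$ be real sequences with $$\alpha_j\ge 0,\qquad 1\ge\beta_1\ge\beta_2\ge\cdots>0,\qquad 1<\sigma_1\le\sigma_2\le\cdots.$$ Assume further that, with $r_j=\alpha_j/\beta_j$, one has $0<r_1\le r_2\le\cdots$, and that there is a constant $c>0$ such that $\sum_{j=1}^d\alpha_j\le c\,d\,\alpha_d$ for every $d\in\mathbb N$. Let $\mathcal B=\{\mathcal B_d\}_{d\in\mathbb N}$ be the associated sequence of additive random fields with Korobov-kernel marginals (see context). Then $\mathcal B$ is strongly polynomially tractable for the normalized error criterion (NOR) if and only if $$B_*:=\liminf_{d\to\infty}\frac{\ln(\alpha_d/\beta_d)}{\ln d}>0,$$ and in that case the exponent of strong polynomial tractability (for NOR) is $$p^{\rm str-avg}=\max\Big\{\frac{2}{B_*},\frac{2}{\sigma_1-1}\Big\}.$$ In particular, if $\alpha_j=1$ for all $j\in\mathbb N$, then $\mathcal B$ is strongly polynomially tractable for NOR if and only if $\liminf_{d\to\infty}\frac{\ln(1/\beta_d)}{\ln d}>0$.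
   Context: For $\alpha\ge0$, $\beta>0$, $\sigma>1$, let $B_{\alpha,\beta,\sigma}(x)$, $x\in[0,1]$, be a zero-mean random process with covariance function $\kappa_{\alpha,\beta,\sigma}(x,y)=\alpha+2\beta\sum_{k=1}^\infty k^{-\sigma}\cos(2\pi k(x-y))$. Let $B_j$, $j\in\mathbb N$, be independent zero-mean random processes on $[0,1]$ with covariance functions $\kappa_{\alpha_j,\beta_j,\sigma_j}$, and for $d\in\mathbb N$ let $\mathcal B_d(\mathbf x)=\sum_{j=1}^d B_j(x_j)$, $\mathbf x\in[0,1]^d$, a zero-mean random field with covariance $\kappa^{\mathcal B_d}(\mathbf x,\mathbf y)=\sum_{j=1}^d\kappa_{\alpha_j,\beta_j,\sigma_j}(x_j,y_j)$, viewed as a random element of $L_2([0,1]^d)$. The $n$th minimal average case error is $e^{\mathcal B_d}(n)=\inf\{(\mathbb E\|\mathcal B_d-\sum_{m=1}^n(\mathcal B_d,\varphi_m)_{2,d}\psi_m\|_{2,d}^2)^{1/2}:\varphi_m,\psi_m\in L_2([0,1]^d)\}$ and $e^{\mathcal B_d}(0)=(\mathbb E\|\mathcal B_d\|_{2,d}^2)^{1/2}$. (Equivalently, if $\lambda_{d,1}\ge\lambda_{d,2}\ge\cdots$ are the eigenvalues of the covariance operator of $\mathcal B_d$ on $L_2([0,1]^d)$, namely $\sum_{j=1}^d\alpha_j$ together with the numbers $\beta_j k^{-\sigma_j}$, $k\in\mathbb N$, $j=1,\dots,d$, each taken twice, then $e^{\mathcal B_d}(n)^2=\sum_{j>n}\lambda_{d,j}$.)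 For $\varepsilon\in(0,1)$, the NOR information complexity is $n^{\mathcal B_d,\mathrm{NOR}}(\varepsilon)=\min\{n\in\mathbb N: e^{\mathcal B_d}(n)\le\varepsilon\, e^{\mathcal B_d}(0)\}$. The problem is strongly polynomially tractable (SPT) for NOR if there are $C,p\ge0$ with $n^{\mathcal B_d,\mathrm{NOR}}(\varepsilon)\le C\varepsilon^{-p}$ for all $d\in\mathbb N$, $\varepsilon\in(0,1)$; the exponent $p^{\rm str-avg}$ is the infimum of such $p$. Convention: $2/B_*=0$ if $B_*=\infty$. *)

theory Defs
  imports "HOL-Analysis.Analysis"
begin

text \<open>Eigenvalues of the covariance operator of the additive field B_d.
  Index None: the eigenvalue sum_{j=1..d} alpha_j (constant eigenfunction).
  Index Some (j,k,b), 1 <= j <= d, k >= 1, b a bool: eigenvalue beta_j k^(-sigma_j)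
  (the bool accounts for multiplicity two, cos and sin).\<close>

definition eig_index :: "nat \<Rightarrow> (nat \<times> nat \<times> bool) option set" where
  "eig_index d = insert None (Some ` ({1..d} \<times> {1..} \<times> UNIV))"

definition eig :: "(nat \<Rightarrow> real) \<Rightarrow> (nat \<Rightarrow> real) \<Rightarrow> (nat \<Rightarrow> real) \<Rightarrow> nat
    \<Rightarrow> (nat \<times> nat \<times> bool) option \<Rightarrow> real" where
  "eig \<alpha> \<beta> \<sigma> d i = (case i of
      None \<Rightarrow> (\<Sum>j=1..d. \<alpha> j)
    | Some (j, k, b) \<Rightarrow> \<beta> j * real k powr (- \<sigma> j))"

text \<open>Squared n-th minimal average case error: the sum of all eigenvalues except
  the n largest, i.e. the infimum over at most n removed indices of the remaining sum.\<close>
definition err_sq :: "(nat \<Rightarrow> real) \<Rightarrow> (nat \<Rightarrow> real) \<Rightarrow> (nat \<Rightarrow> real) \<Rightarrow> nat \<Rightarrow> nat \<Rightarrow> real" where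
  "err_sq \<alpha> \<beta> \<sigma> d n = Inf {infsum (eig \<alpha> \<beta> \<sigma> d) (eig_index d - S) | S.
       S \<subseteq> eig_index d \<and> finite S \<and> card S \<le> n}"

definition err :: "(nat \<Rightarrow> real) \<Rightarrow> (nat \<Rightarrow> real) \<Rightarrow> (nat \<Rightarrow> real) \<Rightarrow> nat \<Rightarrow> nat \<Rightarrow> real" where
  "err \<alpha> \<beta> \<sigma> d n = sqrt (err_sq \<alpha> \<beta> \<sigma> d n)"

definition n_nor :: "(nat \<Rightarrow> real) \<Rightarrow> (nat \<Rightarrow> real) \<Rightarrow> (nat \<Rightarrow> real) \<Rightarrow> nat \<Rightarrow> real \<Rightarrow> nat" where
  "n_nor \<alpha> \<beta> \<sigma> d \<epsilon> = (LEAST n. err \<alpha> \<beta> \<sigma> d n \<le> \<epsilon> * err \<alpha> \<beta> \<sigma> d 0)"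

definition SPT_bound :: "(nat \<Rightarrow> real) \<Rightarrow> (nat \<Rightarrow> real) \<Rightarrow> (nat \<Rightarrow> real) \<Rightarrow> real \<Rightarrow> bool" where
  "SPT_bound \<alpha> \<beta> \<sigma> p \<longleftrightarrow> p \<ge> 0 \<and> (\<exists>C\<ge>0. \<forall>d\<ge>1. \<forall>\<epsilon>. 0 < \<epsilon> \<and> \<epsilon> < 1 \<longrightarrow>
       real (n_nor \<alpha> \<beta> \<sigma> d \<epsilon>) \<le> C * \<epsilon> powr (- p))"

definition SPT_NOR :: "(nat \<Rightarrow> real) \<Rightarrow> (nat \<Rightarrow> real) \<Rightarrow> (nat \<Rightarrow> real) \<Rightarrow> bool" where
  "SPT_NOR \<alpha> \<beta> \<sigma> \<longleftrightarrow> (\<exists>p. SPT_bound \<alpha> \<beta> \<sigma> p)"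

definition p_str_avg :: "(nat \<Rightarrow> real) \<Rightarrow> (nat \<Rightarrow> real) \<Rightarrow> (nat \<Rightarrow> real) \<Rightarrow> real" where
  "p_str_avg \<alpha> \<beta> \<sigma> = Inf {p. SPT_bound \<alpha> \<beta> \<sigma> p}"

definition two_over :: "ereal \<Rightarrow> real" where
  "two_over B = (if B = \<infinity> then 0 else 2 / real_of_ereal B)"

end

theory Submission
  imports Defs
begin

lemma AL:
  fixes t p D C :: real
  assumes t: "t > 0" and pt: "p * t < 1" and D: "D > 0" and C: "C \<ge> 0"
    and freq: "\<forall>M. \<exists>N\<ge>M. N \<ge> 1 \<and> (D * real N powr (-t) < 1 \<longrightarrow> real N \<le> C * (D * real N powr (-t)) powr (-p))"
  shows False
proof -
  define s where "s = 1 - p * t"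
  have s: "s > 0" using pt by (simp add: s_def)
  define K where "K = C * D powr (-p)"
  have K: "K \<ge> 0" using C D by (simp add: K_def)
  obtain M :: nat where M: "real M \<ge> K powr (1/s) + D powr (1/t) + 1"
    using real_arch_simple by blast
  obtain N where N: "N \<ge> M" "N \<ge> 1" and imp: "D * real N powr (-t) < 1 \<longrightarrow> real N \<le> C * (D * real N powr (-t)) powr (-p)"
    using freq by blast
  have NM: "real N \<ge> real M" using N by simp
  have Npos: "real N > 0" using N by simp
  have h: "K powr (1/s) \<ge> 0" "D powr (1/t) \<ge> 0" by auto
  have lt1: "D powr (1/t) < real N" and lt2: "K powr (1/s) < real N" using M NM h by linarith+
  have "D = (D powr (1/t)) powr t" using D t by (simp add: powr_powr)
  also have "\<dots> < real N powr t"
    using lt1 t by (intro powr_less_mono2) auto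
  finally have "D < real N powr t" .
  then have e1: "D * real N powr (-t) < 1" using Npos by (simp add: powr_minus field_simps)
  have "K = (K powr (1/s)) powr s" using K s by (simp add: powr_powr)
  also have "\<dots> < real N powr s"
    using lt2 s by (intro powr_less_mono2) auto
  finally have Ks: "K < real N powr s" .
  have "C * (D * real N powr (-t)) powr (-p) = K * real N powr (p * t)"
    using D Npos by (simp add: K_def powr_mult powr_powr mult.commute)
  also have "\<dots> < real N powr s * real N powr (p * t)"
    using Ks Npos by (intro mult_strict_right_mono) auto
  also have "\<dots> = real N" using Npos by (simp add: s_def powr_add[symmetric])
  finally show False using imp e1 by linarith
qed

locale kor =
  fixes \<alpha> \<beta> \<sigma> :: "nat \<Rightarrow> real"
  assumes alpha_nonneg: "\<forall>j\<ge>1. \<alpha> j \<ge> 0"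
    and beta_pos: "\<forall>j\<ge>1. \<beta> j > 0"
    and sigma1: "\<sigma> 1 > 1"
    and sigma_inc: "\<forall>j\<ge>1. \<sigma> j \<le> \<sigma> (Suc j)"
begin

abbreviation "E d \<equiv> eig \<alpha> \<beta> \<sigma> d"

lemma sigma_ge: "1 \<le> j \<Longrightarrow> \<sigma> 1 \<le> \<sigma> j"
proof (induction j rule: dec_induct)
  case (step n) then show ?case using sigma_inc by (meson order_trans)
qed simp

lemma eig_Some[simp]: "E d (Some (j,k,t)) = \<beta> j * real k powr (- \<sigma> j)"
  by (simp add: eig_def)

lemma eig_None[simp]: "E d None = (\<Sum>j=1..d. \<alpha> j)"
  by (simp add: eig_def)

lemma eig_nonneg: "x \<in> eig_index d \<Longrightarrow> E d x \<ge> 0"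
proof -
  have "(\<Sum>j=1..d. \<alpha> j) \<ge> 0" using alpha_nonneg by (intro sum_nonneg) auto
  moreover have "\<beta> j * real k powr (- \<sigma> j) \<ge> 0" if "j \<ge> 1" for j k
    using beta_pos that by (intro mult_nonneg_nonneg) (auto simp: less_imp_le)
  ultimately show "x \<in> eig_index d \<Longrightarrow> E d x \<ge> 0"
    by (auto simp: eig_index_def)
qed

definition T :: "nat \<Rightarrow> (nat \<Rightarrow> nat) \<Rightarrow> (nat \<times> nat \<times> bool) option set" where
  "T d m = Some ` {(j,k,t). j \<in> {1..d} \<and> m j < k}"

lemma T_sub: "T d m \<subseteq> eig_index d"
  by (auto simp: T_def eig_index_def)

lemma summable_powr: "c > 1 \<Longrightarrow> summable (\<lambda>k. real k powr (- c))"
  by (subst summable_real_powr_iff) auto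

lemma pt_bound:
  assumes "c > 1" "\<gamma> \<ge> 0" "c + \<gamma> \<le> \<sigma> 1" "j \<ge> 1" "m < k"
  shows "real k powr (- \<sigma> j) \<le> real (m+1) powr (-\<gamma>) * real k powr (-c)"
proof -
  have k1: "real k \<ge> 1" using assms by simp
  have "real k powr (- \<sigma> j) \<le> real k powr (-(c+\<gamma>))"
    using sigma_ge[OF assms(4)] assms(3) k1 by (intro powr_mono) auto
  also have "\<dots> = real k powr (-\<gamma>) * real k powr (-c)"
    by (simp add: powr_add[symmetric] add.commute)
  also have "\<dots> \<le> real (m+1) powr (-\<gamma>) * real k powr (-c)"
    using assms by (intro mult_right_mono powr_mono2') auto
  finally show ?thesis .
qed

lemma inner_bound:
  assumes "c > 1" "\<gamma> \<ge> 0" "c + \<gamma> \<le> \<sigma> 1" "j \<ge> 1"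
  shows "(\<Sum>k\<in>{m<..N}. real k powr (- \<sigma> j)) \<le> real (m+1) powr (-\<gamma>) * (\<Sum>k. real k powr (-c))"
proof -
  have "(\<Sum>k\<in>{m<..N}. real k powr (- \<sigma> j)) \<le> (\<Sum>k\<in>{m<..N}. real (m+1) powr (-\<gamma>) * real k powr (-c))"
    using pt_bound[OF assms] by (intro sum_mono) auto
  also have "\<dots> = real (m+1) powr (-\<gamma>) * (\<Sum>k\<in>{m<..N}. real k powr (-c))"
    by (simp add: sum_distrib_left)
  also have "\<dots> \<le> real (m+1) powr (-\<gamma>) * (\<Sum>k. real k powr (-c))"
    using summable_powr[OF assms(1)] by (intro mult_left_mono sum_le_suminf) auto
  finally show ?thesis .
qed

lemma sum_times_bool: "(\<Sum>x\<in>A \<times> (UNIV::bool set). f (fst x)) = 2 * sum f A" for f :: "nat \<Rightarrow> real"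
proof -
  have "(\<Sum>x\<in>A \<times> (UNIV::bool set). f (fst x)) = (\<Sum>a\<in>A. \<Sum>b\<in>(UNIV::bool set). f a)"
    using sum.cartesian_product[of "\<lambda>a b. f a" "UNIV::bool set" A] by (simp add: split_def)
  also have "\<dots> = 2 * sum f A" by (simp add: sum_distrib_left)
  finally show ?thesis .
qed

lemma finite_sum_bound:
  assumes "c > 1" "\<gamma> \<ge> 0" "c + \<gamma> \<le> \<sigma> 1" "finite F" "F \<subseteq> T d m"
  shows "sum (E d) F \<le> 2 * (\<Sum>k. real k powr (-c)) * (\<Sum>j=1..d. \<beta> j * real (m j + 1) powr (-\<gamma>))"
proof -
  define F' where "F' = Some -` F"
  have finF': "finite F'" unfolding F'_def using assms(4) by (intro finite_vimageI) auto
  have FF: "F = Some ` F'" using assms(5) by (auto simp: F'_def T_def)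
  obtain N where N: "\<forall>x\<in>F'. fst (snd x) \<le> N"
    using finite_nat_set_iff_bounded_le[THEN iffD1, OF finite_imageI[OF finF', of "\<lambda>x. fst (snd x)"]]
    by auto
  define G where "G = (SIGMA j:{1..d}. ({m j<..N} \<times> (UNIV::bool set)))"
  have F'G: "F' \<subseteq> G" using assms(5) N by (force simp: F'_def G_def T_def)
  have finG: "finite G" by (simp add: G_def)
  have "sum (E d) F = sum (E d \<circ> Some) F'" by (simp add: FF sum.reindex)
  also have "\<dots> \<le> sum (E d \<circ> Some) G"
    using F'G finG beta_pos by (intro sum_mono2) (auto simp: G_def intro!: mult_nonneg_nonneg less_imp_le)
  also have "\<dots> = (\<Sum>j=1..d. \<Sum>x\<in>{m j<..N} \<times> (UNIV::bool set). \<beta> j * real (fst x) powr (- \<sigma> j))"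
    unfolding G_def
    using sum.Sigma[of "{1..d}" "\<lambda>j. {m j<..N} \<times> (UNIV::bool set)" "\<lambda>j x. (E d \<circ> Some) (j,x)", symmetric]
    by (simp add: split_def case_prod_beta') (auto simp: eig_def split: prod.split intro!: sum.cong)
  also have "\<dots> = (\<Sum>j=1..d. 2 * \<beta> j * (\<Sum>k\<in>{m j<..N}. real k powr (- \<sigma> j)))"
    by (intro sum.cong refl) (simp add: sum_times_bool[where f="\<lambda>k. \<beta> _ * real k powr (- \<sigma> _)"] sum_distrib_left mult.assoc)
  also have "\<dots> \<le> (\<Sum>j=1..d. 2 * \<beta> j * (real (m j+1) powr (-\<gamma>) * (\<Sum>k. real k powr (-c))))"
    using inner_bound[OF assms(1-3)] beta_pos by (intro sum_mono mult_left_mono) auto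
  also have "\<dots> = 2 * (\<Sum>k. real k powr (-c)) * (\<Sum>j=1..d. \<beta> j * real (m j + 1) powr (-\<gamma>))"
    by (simp add: sum_distrib_left mult_ac)
  finally show ?thesis .
qed

definition Zs :: "real \<Rightarrow> real" where "Zs c = (\<Sum>k. real k powr (-c))"

lemma T_nonneg: "x \<in> T d m \<Longrightarrow> E d x \<ge> 0"
  using eig_nonneg T_sub by blast

lemma summable_T: "E d summable_on T d m"
proof (rule nonneg_bdd_above_summable_on)
  show "bdd_above (sum (E d) ` {F. F \<subseteq> T d m \<and> finite F})"
    using finite_sum_bound[of "\<sigma> 1" 0 _ d m, OF sigma1] unfolding bdd_above_def by auto
qed (rule T_nonneg)

lemma infsum_T_bound:
  assumes "c > 1" "\<gamma> \<ge> 0" "c + \<gamma> \<le> \<sigma> 1"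
  shows "infsum (E d) (T d m) \<le> 2 * Zs c * (\<Sum>j=1..d. \<beta> j * real (m j + 1) powr (-\<gamma>))"
  unfolding Zs_def by (rule infsum_le_finite_sums[OF summable_T finite_sum_bound[OF assms]])

lemma index_split: "eig_index d = insert None (T d (\<lambda>_. 0))"
  by (auto simp: eig_index_def T_def)

lemma summable_all: "E d summable_on eig_index d"
  unfolding index_split by (subst summable_on_insert_iff) (rule summable_T)

abbreviation "ES d n \<equiv> err_sq \<alpha> \<beta> \<sigma> d n"

lemma ES0: "ES d 0 = infsum (E d) (eig_index d)"
proof -
  have "{infsum (E d) (eig_index d - S) | S. S \<subseteq> eig_index d \<and> finite S \<and> card S \<le> 0}
      = {infsum (E d) (eig_index d)}" by (auto intro!: exI[of _ "{}"])
  then show ?thesis by (simp add: err_sq_def)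
qed

lemma ES0_split: "ES d 0 = (\<Sum>j=1..d. \<alpha> j) + infsum (E d) (T d (\<lambda>_. 0))"
proof -
  have "None \<notin> T d (\<lambda>_. 0)" by (auto simp: T_def)
  then show ?thesis unfolding ES0 index_split by (simp add: infsum_insert[OF summable_T])
qed

lemma ES0_ge: "ES d 0 \<ge> (\<Sum>j=1..d. \<alpha> j)"
  unfolding ES0_split using infsum_nonneg[OF T_nonneg] by (simp add: T_nonneg infsum_nonneg)

lemma ES0_le:
  "ES d 0 \<le> (\<Sum>j=1..d. \<alpha> j) + 2 * Zs (\<sigma> 1) * (\<Sum>j=1..d. \<beta> j)"
  unfolding ES0_split using infsum_T_bound[of "\<sigma> 1" 0 d "\<lambda>_. 0", OF sigma1] by simp

lemma ES_set_nonneg: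
  "x \<in> {infsum (E d) (eig_index d - S) | S. S \<subseteq> eig_index d \<and> finite S \<and> card S \<le> n} \<Longrightarrow> x \<ge> 0"
  using eig_nonneg by (auto intro!: infsum_nonneg)

lemma ES_le:
  assumes "S \<subseteq> eig_index d" "finite S" "card S \<le> n"
  shows "ES d n \<le> infsum (E d) (eig_index d - S)"
  unfolding err_sq_def
proof (rule cInf_lower)
  show "bdd_below {infsum (E d) (eig_index d - S) | S. S \<subseteq> eig_index d \<and> finite S \<and> card S \<le> n}"
    unfolding bdd_below_def using ES_set_nonneg by blast
qed (use assms in auto)

lemma ES_ge:
  assumes "\<And>S. S \<subseteq> eig_index d \<Longrightarrow> finite S \<Longrightarrow> card S \<le> n \<Longrightarrow> B \<le> infsum (E d) (eig_index d - S)"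
  shows "B \<le> ES d n"
  unfolding err_sq_def
  by (rule cInf_greatest) (use assms in auto)

lemma ES_nonneg: "ES d n \<ge> 0"
  by (rule ES_ge) (use eig_nonneg in \<open>auto intro!: infsum_nonneg\<close>)

lemma LB_gen:
  assumes "finite F" "F \<subseteq> eig_index d" "\<And>x. x \<in> F \<Longrightarrow> E d x \<ge> \<mu>" "\<mu> \<ge> 0"
  shows "(real (card F) - real n) * \<mu> \<le> ES d n"
proof (rule ES_ge)
  fix S assume S: "S \<subseteq> eig_index d" "finite S" "card S \<le> n"
  have "card F \<le> card (F - S) + card S"
  proof -
    have "card F \<le> card ((F - S) \<union> S)" using assms(1) S(2) by (intro card_mono) auto
    also have "\<dots> \<le> card (F - S) + card S" by (rule card_Un_le)
    finally show ?thesis .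
  qed
  then have "real (card F) - real n \<le> real (card (F - S))" using S(3) by linarith
  then have "(real (card F) - real n) * \<mu> \<le> real (card (F - S)) * \<mu>"
    using assms(4) by (intro mult_right_mono) auto
  also have "\<dots> \<le> sum (E d) (F - S)"
    using assms(3) by (intro sum_bounded_below) auto
  also have "\<dots> = infsum (E d) (F - S)" using assms(1) by simp
  also have "\<dots> \<le> infsum (E d) (eig_index d - S)"
    using assms(1,2) eig_nonneg
    by (intro infsum_mono_neutral summable_on_subset[OF summable_all]) auto
  finally show "(real (card F) - real n) * \<mu> \<le> infsum (E d) (eig_index d - S)" .
qed

lemma UB_gen:
  assumes "c > 1" "\<gamma> \<ge> 0" "c + \<gamma> \<le> \<sigma> 1"
  shows "ES d (1 + 2 * (\<Sum>j=1..d. m j)) \<le> 2 * Zs c * (\<Sum>j=1..d. \<beta> j * real (m j + 1) powr (-\<gamma>))"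
proof -
  define S where "S = insert None (Some ` (SIGMA j:{1..d}. {1..m j} \<times> (UNIV::bool set)))"
  have fin: "finite S" by (simp add: S_def)
  have sub: "S \<subseteq> eig_index d" by (auto simp: S_def eig_index_def)
  have "card S \<le> Suc (card (Some ` (SIGMA j:{1..d}. {1..m j} \<times> (UNIV::bool set))))"
    unfolding S_def by (rule card_insert_le_m1) auto
  also have "card (Some ` (SIGMA j:{1..d}. {1..m j} \<times> (UNIV::bool set))) = card (SIGMA j:{1..d}. {1..m j} \<times> (UNIV::bool set))"
    by (rule card_image) auto
  also have "\<dots> = (\<Sum>j=1..d. 2 * m j)"
    by (subst card_SigmaI) (auto simp: card_cartesian_product mult.commute)
  finally have cS: "card S \<le> 1 + 2 * (\<Sum>j=1..d. m j)" by (simp add: sum_distrib_left)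
  have diff: "eig_index d - S = T d m"
    by (auto simp: S_def eig_index_def T_def image_iff not_le)
  show ?thesis
    using ES_le[OF sub fin cS] infsum_T_bound[OF assms, of d m] diff by simp
qed

abbreviation "NN d \<epsilon> \<equiv> n_nor \<alpha> \<beta> \<sigma> d \<epsilon>"

lemma err_iff:
  assumes "\<epsilon> > 0"
  shows "err \<alpha> \<beta> \<sigma> d n \<le> \<epsilon> * err \<alpha> \<beta> \<sigma> d 0 \<longleftrightarrow> ES d n \<le> \<epsilon>\<^sup>2 * ES d 0"
proof -
  have "\<epsilon> * err \<alpha> \<beta> \<sigma> d 0 = sqrt (\<epsilon>\<^sup>2 * ES d 0)"
    using assms by (simp add: err_def real_sqrt_mult)
  then show ?thesis by (simp add: err_def)
qed

lemma NN_le: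
  assumes "\<epsilon> > 0" "ES d n \<le> \<epsilon>\<^sup>2 * ES d 0"
  shows "NN d \<epsilon> \<le> n"
  unfolding n_nor_def by (rule Least_le) (use err_iff[OF assms(1)] assms(2) in auto)

lemma NN_gt:
  assumes "\<epsilon> > 0" "ES d n0 \<le> \<epsilon>\<^sup>2 * ES d 0" "\<And>n. n \<le> N \<Longrightarrow> ES d n > \<epsilon>\<^sup>2 * ES d 0"
  shows "N < NN d \<epsilon>"
proof (rule ccontr)
  assume "\<not> N < NN d \<epsilon>"
  moreover have "ES d (NN d \<epsilon>) \<le> \<epsilon>\<^sup>2 * ES d 0"
    unfolding n_nor_def using err_iff[OF assms(1)] assms(2)
    by (metis (mono_tags, lifting) LeastI)
  ultimately show False using assms(3)[of "NN d \<epsilon>"] by auto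
qed

lemma Zs_nonneg: "c > 1 \<Longrightarrow> Zs c \<ge> 0"
  unfolding Zs_def by (rule suminf_nonneg) (auto simp: summable_powr)

lemma ES_small:
  assumes A: "(\<Sum>j=1..d. \<alpha> j) > 0" and e: "\<epsilon> > 0"
  shows "\<exists>n. ES d n \<le> \<epsilon>\<^sup>2 * ES d 0"
proof -
  define \<gamma> where "\<gamma> = (\<sigma> 1 - 1) / 2"
  define c where "c = \<sigma> 1 - \<gamma>"
  have g: "\<gamma> > 0" and c1: "c > 1" and cg: "c + \<gamma> \<le> \<sigma> 1"
    using sigma1 by (auto simp: \<gamma>_def c_def field_simps)
  define B where "B = 2 * Zs c * (\<Sum>j=1..d. \<beta> j)"
  have B0: "B \<ge> 0" unfolding B_def using beta_pos Zs_nonneg[OF c1]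
    by (intro mult_nonneg_nonneg sum_nonneg) (auto simp: less_imp_le)
  define \<eta> where "\<eta> = \<epsilon>\<^sup>2 * (\<Sum>j=1..d. \<alpha> j) / (B + 1)"
  have eta: "\<eta> > 0" unfolding \<eta>_def using A e B0 by simp
  obtain M :: nat where M: "real M \<ge> \<eta> powr (-1/\<gamma>)" using real_arch_simple by blast
  have "real (M+1) powr (-\<gamma>) < (\<eta> powr (-1/\<gamma>)) powr (-\<gamma>)"
    using M g eta by (intro powr_less_mono2_neg) auto
  also have "\<dots> = \<eta>" using g eta by (simp add: powr_powr)
  finally have Mlt: "real (M+1) powr (-\<gamma>) < \<eta>" .
  have "ES d (1 + 2 * (\<Sum>j=1..d. M)) \<le> 2 * Zs c * (\<Sum>j=1..d. \<beta> j * real (M + 1) powr (-\<gamma>))"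
    using UB_gen[OF c1 less_imp_le[OF g] cg, of d "\<lambda>_. M"] by simp
  also have "\<dots> = B * real (M + 1) powr (-\<gamma>)"
    by (simp add: B_def sum_distrib_right[symmetric] mult_ac)
  also have "\<dots> \<le> (B + 1) * \<eta>"
    using B0 Mlt by (intro mult_mono) auto
  also have "\<dots> = \<epsilon>\<^sup>2 * (\<Sum>j=1..d. \<alpha> j)" using B0 by (simp add: \<eta>_def)
  also have "\<dots> \<le> \<epsilon>\<^sup>2 * ES d 0" using ES0_ge by (intro mult_left_mono) auto
  finally show ?thesis by blast
qed

lemma LB1:
  assumes a1: "\<alpha> 1 > 0" and sp: "SPT_bound \<alpha> \<beta> \<sigma> p"
  shows "p \<ge> 2 / (\<sigma> 1 - 1)"
proof (rule ccontr)
  assume "\<not> p \<ge> 2 / (\<sigma> 1 - 1)"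
  then have plt: "p < 2 / (\<sigma> 1 - 1)" by simp
  from sp obtain C where C: "C \<ge> 0" and bnd: "\<forall>d\<ge>1. \<forall>\<epsilon>. 0 < \<epsilon> \<and> \<epsilon> < 1 \<longrightarrow> real (NN d \<epsilon>) \<le> C * \<epsilon> powr (- p)"
    unfolding SPT_bound_def by blast
  define t where "t = (\<sigma> 1 - 1) / 2"
  have t: "t > 0" using sigma1 by (simp add: t_def)
  have pt: "p * t < 1" using plt sigma1 by (simp add: t_def field_simps)
  define K1 where "K1 = ES 1 0"
  have K1: "K1 > 0" using ES0_ge[of 1] a1 by (simp add: K1_def)
  define X where "X = \<beta> 1 * 2 powr (- \<sigma> 1) / (2 * K1)"
  have b1: "\<beta> 1 > 0" using beta_pos by simp
  have X: "X > 0" using K1 b1 by (simp add: X_def)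
  define D where "D = sqrt X"
  have D: "D > 0" using X by (simp add: D_def)
  show False
  proof (rule AL[OF t pt D C], intro allI)
    fix M :: nat
    define N where "N = max M 1"
    have N1: "N \<ge> 1" by (simp add: N_def)
    have Npos: "real N > 0" using N1 by simp
    have "D * real N powr (- t) < 1 \<longrightarrow> real N \<le> C * (D * real N powr (- t)) powr (- p)"
    proof
      define \<epsilon> where "\<epsilon> = D * real N powr (- t)"
      assume e1: "D * real N powr (- t) < 1"
      have e0: "\<epsilon> > 0" using D Npos by (simp add: \<epsilon>_def)
      have "\<epsilon>\<^sup>2 = D\<^sup>2 * (real N powr (-t) * real N powr (-t))"
        by (simp add: \<epsilon>_def power2_eq_square mult_ac)
      also have "\<dots> = X * real N powr (1 - \<sigma> 1)"
        using X by (simp add: D_def powr_add[symmetric] t_def)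
      finally have esq: "\<epsilon>\<^sup>2 = X * real N powr (1 - \<sigma> 1)" .
      define \<mu> where "\<mu> = \<beta> 1 * real (2*N) powr (- \<sigma> 1)"
      define F where "F = Some ` ({1::nat} \<times> {1..2*N} \<times> {True})"
      have cardF: "card F = 2 * N" unfolding F_def
        by (subst card_image) (auto simp: card_cartesian_product)
      have lowb: "(real (card F) - real n) * \<mu> \<le> ES 1 n" for n
      proof (rule LB_gen)
        show "finite F" by (simp add: F_def)
        show "F \<subseteq> eig_index 1" by (auto simp: F_def eig_index_def)
        show "\<mu> \<ge> 0" using b1 by (simp add: \<mu>_def)
        fix x assume "x \<in> F"
        then obtain k where k: "x = Some (1, k, True)" "1 \<le> k" "k \<le> 2*N" by (auto simp: F_def)
        have "real (2*N) powr (- \<sigma> 1) \<le> real k powr (- \<sigma> 1)"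
          using k sigma1 by (intro powr_mono2') auto
        then show "\<mu> \<le> E 1 x" using k b1 by (simp add: \<mu>_def)
      qed
      have Nmu: "real N * \<mu> = 2 * K1 * \<epsilon>\<^sup>2"
      proof -
        have "real N * \<mu> = \<beta> 1 * 2 powr (- \<sigma> 1) * (real N * real N powr (- \<sigma> 1))"
          using Npos by (simp add: \<mu>_def powr_mult mult_ac)
        also have "\<dots> = \<beta> 1 * 2 powr (- \<sigma> 1) * real N powr (1 - \<sigma> 1)"
          by (simp add: powr_mult_base)
        also have "\<dots> = 2 * K1 * \<epsilon>\<^sup>2" using K1 by (simp add: esq X_def)
        finally show ?thesis .
      qed
      have gt: "ES 1 n > \<epsilon>\<^sup>2 * ES 1 0" if "n \<le> N" for n
      proof -
        have "\<epsilon>\<^sup>2 * ES 1 0 < 2 * K1 * \<epsilon>\<^sup>2" using K1 e0 by (simp add: K1_def)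
        also have "\<dots> = real N * \<mu>" by (rule Nmu[symmetric])
        also have "\<dots> \<le> (real (card F) - real n) * \<mu>"
          using that b1 by (intro mult_right_mono) (auto simp: cardF \<mu>_def)
        also have "\<dots> \<le> ES 1 n" by (rule lowb)
        finally show ?thesis .
      qed
      obtain n0 where n0: "ES 1 n0 \<le> \<epsilon>\<^sup>2 * ES 1 0" using ES_small[of 1 \<epsilon>] a1 e0 by auto
      have "N < NN 1 \<epsilon>" by (rule NN_gt[OF e0 n0 gt])
      moreover have "real (NN 1 \<epsilon>) \<le> C * \<epsilon> powr (- p)" using bnd e0 e1 by (simp add: \<epsilon>_def)
      ultimately show "real N \<le> C * (D * real N powr (- t)) powr (- p)" by (simp add: \<epsilon>_def)
    qed
    then show "\<exists>N\<ge>M. N \<ge> 1 \<and> (D * real N powr (- t) < 1 \<longrightarrow> real N \<le> C * (D * real N powr (- t)) powr (- p))"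
      using N1 by (intro exI[of _ N]) (auto simp: N_def)
  qed
qed

end

locale kor2 = kor +
  fixes c0 :: real
  assumes beta_dec: "\<forall>j\<ge>1. \<beta> (Suc j) \<le> \<beta> j"
    and r1: "\<alpha> 1 / \<beta> 1 > 0"
    and r_inc: "\<forall>j\<ge>1. \<alpha> j / \<beta> j \<le> \<alpha> (Suc j) / \<beta> (Suc j)"
    and c_pos: "c0 > 0"
    and c_bound: "\<forall>d\<ge>1. (\<Sum>j=1..d. \<alpha> j) \<le> c0 * real d * \<alpha> d"
begin

abbreviation "r j \<equiv> \<alpha> j / \<beta> j"
abbreviation "A d \<equiv> (\<Sum>j=1..d. \<alpha> j)"

lemma r_mono: "1 \<le> j \<Longrightarrow> r 1 \<le> r j"
proof (induction j rule: dec_induct)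
  case (step n) then show ?case using r_inc by (meson order_trans)
qed simp

lemma r_pos: "1 \<le> j \<Longrightarrow> r j > 0"
  using r_mono r1 by fastforce

lemma alpha_pos: "1 \<le> j \<Longrightarrow> \<alpha> j > 0"
  using r_pos beta_pos by (fastforce simp: zero_less_divide_iff)

lemma beta_mono: assumes "1 \<le> j" shows "j \<le> d \<Longrightarrow> \<beta> d \<le> \<beta> j"
proof (induction d rule: dec_induct)
  case (step n) then show ?case using beta_dec assms by (meson order_trans)
qed simp

lemma A_pos: "1 \<le> d \<Longrightarrow> A d > 0"
proof -
  assume d: "1 \<le> d"
  have "\<alpha> 1 \<le> A d" using d alpha_pos by (intro member_le_sum) (auto intro: less_imp_le)
  then show ?thesis using alpha_pos[of 1] by simp
qed

lemma beta_eq: assumes "1 \<le> j" shows "\<beta> j = \<alpha> j / r j"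
proof -
  have "\<alpha> j \<noteq> 0" "\<beta> j \<noteq> 0" using alpha_pos[OF assms] beta_pos assms by auto
  then show ?thesis by simp
qed

lemma sum_beta_le: "(\<Sum>j=1..d. \<beta> j) \<le> A d / r 1"
proof -
  have "(\<Sum>j=1..d. \<beta> j) \<le> (\<Sum>j=1..d. \<alpha> j / r 1)"
  proof (intro sum_mono)
    fix j assume "j \<in> {1..d}"
    then have j: "1 \<le> j" by simp
    have "\<beta> j = \<alpha> j / r j" by (rule beta_eq[OF j])
    also have "\<dots> \<le> \<alpha> j / r 1"
      using alpha_pos[OF j] r_mono[OF j] r1 r_pos[OF j] by (metis divide_left_mono less_imp_le mult_pos_pos)
    finally show "\<beta> j \<le> \<alpha> j / r 1" .
  qed
  also have "(\<Sum>j=1..d. \<alpha> j / r 1) = A d / r 1" by (rule sum_divide_distrib[symmetric])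
  finally show ?thesis .
qed

definition "K0 = 1 + 2 * Zs (\<sigma> 1) / r 1"

lemma K0_pos: "K0 > 0"
proof -
  have "2 * Zs (\<sigma> 1) / r 1 \<ge> 0" using Zs_nonneg[OF sigma1] r1 by (intro divide_nonneg_pos) auto
  then show ?thesis unfolding K0_def by linarith
qed

lemma ES0_leK: "ES d 0 \<le> K0 * A d"
proof -
  have "ES d 0 \<le> A d + 2 * Zs (\<sigma> 1) * (\<Sum>j=1..d. \<beta> j)" by (rule ES0_le)
  also have "\<dots> \<le> A d + 2 * Zs (\<sigma> 1) * (A d / r 1)"
    using sum_beta_le Zs_nonneg[OF sigma1] by (intro add_left_mono mult_left_mono) auto
  also have "\<dots> = K0 * A d" by (simp add: K0_def field_simps)
  finally show ?thesis .
qed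


definition "Bs = liminf (\<lambda>d. ereal (ln (\<alpha> d / \<beta> d) / ln (real d)))"

lemma LB2:
  assumes sp: "SPT_bound \<alpha> \<beta> \<sigma> p" and p: "p > 0"
  shows "ereal (2 / p) \<le> Bs"
proof (rule ccontr)
  assume "\<not> ereal (2 / p) \<le> Bs"
  then have "max Bs 0 < ereal (2 / p)" using p by auto
  then obtain b where b1: "max Bs 0 < ereal b" and b2: "ereal b < ereal (2 / p)"
    using ereal_dense2 by blast
  have b0: "b > 0" and bp: "b < 2 / p" and Bb: "\<not> ereal b \<le> Bs" using b1 b2 by auto
  from Bb obtain y where y: "y < ereal b" and ne: "\<not> eventually (\<lambda>d. y < ereal (ln (r d) / ln (real d))) sequentially"
    unfolding Bs_def le_Liminf_iff by auto
  have freqd: "\<exists>d\<ge>N. ln (r d) / ln (real d) < b" for N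
  proof -
    from ne have "frequently (\<lambda>d. \<not> y < ereal (ln (r d) / ln (real d))) sequentially"
      by (simp add: not_eventually)
    then obtain d where "d \<ge> N" "\<not> y < ereal (ln (r d) / ln (real d))"
      unfolding frequently_sequentially by blast
    then have "ereal (ln (r d) / ln (real d)) < ereal b" using y
      by (meson le_less_trans not_less)
    then show ?thesis using \<open>d \<ge> N\<close> by auto
  qed
  from sp obtain C where C: "C \<ge> 0" and bnd: "\<forall>d\<ge>1. \<forall>\<epsilon>. 0 < \<epsilon> \<and> \<epsilon> < 1 \<longrightarrow> real (NN d \<epsilon>) \<le> C * \<epsilon> powr (- p)"
    unfolding SPT_bound_def by blast
  define t where "t = b / 2"
  have t: "t > 0" using b0 by (simp add: t_def)
  have pt: "p * t < 1" using bp p by (simp add: t_def field_simps)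
  define D where "D = 1 / sqrt (2 * c0 * K0)"
  have cK: "2 * c0 * K0 > 0" using c_pos K0_pos by simp
  have D: "D > 0" using cK by (simp add: D_def)
  show False
  proof (rule AL[OF t pt D C], intro allI)
    fix M :: nat
    obtain d where dM: "d \<ge> max M 2" and dlt: "ln (r d) / ln (real d) < b" using freqd by blast
    have d1: "d \<ge> 1" and d2: "d \<ge> 2" using dM by auto
    have dpos: "real d > 0" using d1 by simp
    have lnd: "ln (real d) > 0" using d2 by simp
    have rd: "r d > 0" using r_pos d1 by simp
    define W where "W = real d powr b"
    have W: "W > 0" using dpos by (simp add: W_def)
    have rW: "r d \<le> W"
    proof -
      have "ln (r d) < b * ln (real d)" using dlt lnd by (simp add: field_simps)
      then have "exp (ln (r d)) < exp (b * ln (real d))" by simp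
      then show ?thesis using rd dpos by (simp add: W_def powr_def)
    qed
    have "D * real d powr (- t) < 1 \<longrightarrow> real d \<le> C * (D * real d powr (- t)) powr (- p)"
    proof
      define \<epsilon> where "\<epsilon> = D * real d powr (- t)"
      assume e1: "D * real d powr (- t) < 1"
      have e0: "\<epsilon> > 0" using D dpos by (simp add: \<epsilon>_def)
      have "\<epsilon>\<^sup>2 = D\<^sup>2 * (real d powr (-t) * real d powr (-t))"
        by (simp add: \<epsilon>_def power2_eq_square mult_ac)
      also have "\<dots> = D\<^sup>2 * real d powr (- b)"
        by (simp add: powr_add[symmetric] t_def)
      also have "\<dots> = 1 / (2 * c0 * K0 * W)"
        using cK by (simp add: D_def W_def powr_minus power_divide field_simps)
      finally have esq: "\<epsilon>\<^sup>2 = 1 / (2 * c0 * K0 * W)" .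
      define F where "F = Some ` ({1..d} \<times> {1::nat} \<times> (UNIV::bool set))"
      have cardF: "card F = 2 * d" unfolding F_def
        by (subst card_image) (auto simp: card_cartesian_product)
      have lowb: "(real (card F) - real n) * \<beta> d \<le> ES d n" for n
      proof (rule LB_gen)
        show "finite F" by (simp add: F_def)
        show "F \<subseteq> eig_index d" by (auto simp: F_def eig_index_def)
        show "\<beta> d \<ge> 0" using beta_pos d1 by (simp add: less_imp_le)
        fix x assume "x \<in> F"
        then obtain j tt where j: "x = Some (j, 1, tt)" "1 \<le> j" "j \<le> d" by (auto simp: F_def)
        then show "\<beta> d \<le> E d x" using beta_mono[of j d] by simp
      qed
      have Ad: "A d > 0" using A_pos d1 by simp
      have cb: "A d \<le> c0 * real d * \<alpha> d" using c_bound d1 by simp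
      have ad: "\<alpha> d > 0" using alpha_pos d1 by simp
      have gt: "ES d n > \<epsilon>\<^sup>2 * ES d 0" if "n \<le> d" for n
      proof -
        have "\<epsilon>\<^sup>2 * ES d 0 \<le> \<epsilon>\<^sup>2 * (K0 * A d)" using ES0_leK e0 by (intro mult_left_mono) auto
        also have "\<dots> = A d / (2 * c0 * W)" using K0_pos by (simp add: esq field_simps)
        also have "\<dots> < A d / (c0 * W)" using Ad c_pos W by (simp add: field_simps)
        also have "\<dots> \<le> real d * \<alpha> d / W" using cb c_pos W by (simp add: field_simps)
        also have "\<dots> \<le> real d * \<alpha> d / r d"
        proof -
          have h1: "0 < W * r d" using W rd by (rule mult_pos_pos)
          have h2: "0 \<le> real d * \<alpha> d" using ad dpos by simp
          show ?thesis by (rule divide_left_mono[OF rW h2 h1])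
        qed
        also have "\<dots> = real d * \<beta> d" using beta_eq[OF d1] ad by simp
        also have "\<dots> \<le> (real (card F) - real n) * \<beta> d"
          using that beta_pos d1 by (intro mult_right_mono) (auto simp: cardF less_imp_le)
        also have "\<dots> \<le> ES d n" by (rule lowb)
        finally show ?thesis .
      qed
      obtain n0 where n0: "ES d n0 \<le> \<epsilon>\<^sup>2 * ES d 0" using ES_small[of d \<epsilon>] A_pos d1 e0 by auto
      have "d < NN d \<epsilon>" by (rule NN_gt[OF e0 n0 gt])
      moreover have "real (NN d \<epsilon>) \<le> C * \<epsilon> powr (- p)" using bnd e0 e1 d1 by (simp add: \<epsilon>_def)
      ultimately show "real d \<le> C * (D * real d powr (- t)) powr (- p)" by (simp add: \<epsilon>_def)
    qed
    then show "\<exists>N\<ge>M. N \<ge> 1 \<and> (D * real N powr (- t) < 1 \<longrightarrow> real N \<le> C * (D * real N powr (- t)) powr (- p))"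
      using d1 dM by (intro exI[of _ d]) auto
  qed
qed


lemma Zs_ge1: "c > 1 \<Longrightarrow> Zs c \<ge> 1"
proof -
  assume c: "c > 1"
  have "(\<Sum>k\<in>{1::nat}. real k powr (-c)) \<le> (\<Sum>k. real k powr (-c))"
    using summable_powr[OF c] by (intro sum_le_suminf) auto
  then show ?thesis by (simp add: Zs_def)
qed

lemma kappa_exists:
  assumes "ereal b < Bs" "b > 0"
  shows "\<exists>\<kappa>>0. \<forall>j\<ge>1. r j \<ge> \<kappa> * real j powr b"
proof -
  have "eventually (\<lambda>d. ereal b < ereal (ln (r d) / ln (real d))) sequentially"
    using less_LiminfD[OF assms(1)[unfolded Bs_def]] by simp
  then obtain D0 where D0: "\<And>d. d \<ge> D0 \<Longrightarrow> b < ln (r d) / ln (real d)"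
    unfolding eventually_sequentially by auto
  define D1 where "D1 = max D0 2"
  have D1: "real D1 \<ge> 2" by (simp add: D1_def)
  define \<kappa> where "\<kappa> = min 1 (r 1 / real D1 powr b)"
  have r1p: "r 1 > 0" using r1 by simp
  have "r 1 / real D1 powr b > 0" by (rule divide_pos_pos[OF r1p]) (use D1 in simp)
  then have kp: "\<kappa> > 0" by (simp add: \<kappa>_def)
  have "r j \<ge> \<kappa> * real j powr b" if j: "j \<ge> 1" for j
  proof (cases "j \<ge> D1")
    case True
    then have jD0: "j \<ge> D0" and j2: "real j \<ge> 2" using D1 by (auto simp: D1_def)
    have lnj: "ln (real j) > 0" using j2 by simp
    have rj: "r j > 0" using r_pos j by simp
    have "b * ln (real j) < ln (r j)" using D0[OF jD0] lnj by (simp add: field_simps)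
    then have "exp (b * ln (real j)) < exp (ln (r j))" by simp
    then have "real j powr b < r j" using rj j2 by (simp add: powr_def)
    moreover have "\<kappa> * real j powr b \<le> 1 * real j powr b"
      by (intro mult_right_mono) (auto simp: \<kappa>_def)
    ultimately show ?thesis by linarith
  next
    case False
    have "\<kappa> * real j powr b \<le> (r 1 / real D1 powr b) * real D1 powr b"
      using False j kp assms(2) by (intro mult_mono powr_mono2) (auto simp: \<kappa>_def less_imp_le)
    also have "\<dots> = r 1" using D1 by simp
    also have "\<dots> \<le> r j" by (rule r_mono[OF j])
    finally show ?thesis .
  qed
  then show ?thesis using kp by blast
qed


lemma UB_core:
  assumes kp: "\<kappa> > 0" and rk: "\<forall>j\<ge>1. r j \<ge> \<kappa> * real j powr b"
    and p: "p > 0" and bp: "b > 2 / p" and ps: "2 / p < \<sigma> 1 - 1"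
  shows "SPT_bound \<alpha> \<beta> \<sigma> p"
proof -
  define q where "q = p / 2"
  define \<gamma> where "\<gamma> = 1 / q"
  define c where "c = \<sigma> 1 - \<gamma>"
  define e where "e = b * q"
  have q: "q > 0" using p by (simp add: q_def)
  have g: "\<gamma> > 0" using q by (simp add: \<gamma>_def)
  have qg: "q * \<gamma> = 1" using q by (simp add: \<gamma>_def)
  have c1: "c > 1" using ps p by (simp add: c_def \<gamma>_def q_def)
  have cg: "c + \<gamma> \<le> \<sigma> 1" by (simp add: c_def)
  have e1: "e > 1" using bp p by (simp add: e_def q_def field_simps)
  have b0: "b > 0" using bp p by (smt (verit) divide_pos_pos)
  define Zc where "Zc = Zs c"
  have Zc: "Zc \<ge> 1" using Zs_ge1[OF c1] by (simp add: Zc_def)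
  define C1 where "C1 = (\<kappa> / (2 * Zc)) powr (- q)"
  define C where "C = 1 + 2 * C1 * Zs e"
  have C0: "C \<ge> 0" using Zs_nonneg[OF e1] by (simp add: C_def C1_def)
  have main: "real (NN d \<epsilon>) \<le> C * \<epsilon> powr (- p)" if d1: "d \<ge> 1" and e0: "0 < \<epsilon>" and e1': "\<epsilon> < 1" for d \<epsilon>
  proof -
    define \<delta> where "\<delta> = \<epsilon>\<^sup>2 / (2 * Zc)"
    have dl: "\<delta> > 0" using e0 Zc by (simp add: \<delta>_def)
    define Y where "Y = (\<kappa> * \<delta>) powr (- q)"
    have Y: "Y > 0" using kp dl by (simp add: Y_def)
    define m where "m j = nat \<lfloor>Y * real j powr (- e)\<rfloor>" for j
    have m_le: "real (m j) \<le> Y * real j powr (- e)" for j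
      using Y by (simp add: m_def)
    have m_tail: "real (m j + 1) powr (- \<gamma>) \<le> \<kappa> * \<delta> * real j powr b" if j: "j \<ge> 1" for j
    proof -
      have jp: "real j > 0" using j by simp
      have pos: "Y * real j powr (- e) > 0" using Y jp by simp
      have lt: "Y * real j powr (- e) < real (m j + 1)"
        using pos by (simp add: m_def) linarith
      have "real (m j + 1) powr (- \<gamma>) \<le> (Y * real j powr (- e)) powr (- \<gamma>)"
        using lt pos g by (intro powr_mono2') auto
      also have "\<dots> = (\<kappa> * \<delta>) powr (q * \<gamma>) * real j powr (e * \<gamma>)"
        using Y jp kp dl by (simp add: Y_def powr_mult powr_powr)
      also have "\<dots> = \<kappa> * \<delta> * real j powr b"
        using qg kp dl by (simp add: e_def mult.assoc)
      finally show ?thesis .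
    qed
    define n where "n = 1 + 2 * (\<Sum>j=1..d. m j)"
    have "ES d n \<le> 2 * Zc * (\<Sum>j=1..d. \<beta> j * real (m j + 1) powr (-\<gamma>))"
      unfolding n_def Zc_def by (rule UB_gen[OF c1 less_imp_le[OF g] cg])
    also have "\<dots> \<le> 2 * Zc * (\<Sum>j=1..d. \<alpha> j * \<delta>)"
    proof (intro mult_left_mono sum_mono)
      fix j assume "j \<in> {1..d}"
      then have j: "j \<ge> 1" by simp
      have bj: "\<beta> j > 0" using beta_pos j by simp
      have aj: "\<alpha> j > 0" using alpha_pos j by simp
      have rj: "r j \<ge> \<kappa> * real j powr b" using rk j by simp
      have "\<beta> j * real (m j + 1) powr (-\<gamma>) \<le> \<beta> j * (\<kappa> * \<delta> * real j powr b)"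
        using m_tail[OF j] bj by (intro mult_left_mono) auto
      also have "\<dots> = \<beta> j * (\<kappa> * real j powr b) * \<delta>" by (simp add: mult_ac)
      also have "\<dots> \<le> \<beta> j * r j * \<delta>"
        using rj bj dl by (intro mult_right_mono mult_left_mono) auto
      also have "\<dots> = \<alpha> j * \<delta>" using bj by simp
      finally show "\<beta> j * real (m j + 1) powr (-\<gamma>) \<le> \<alpha> j * \<delta>" .
    qed (use Zc in auto)
    also have "\<dots> = 2 * Zc * (A d * \<delta>)" by (simp add: sum_distrib_right)
    also have "\<dots> = \<epsilon>\<^sup>2 * A d" using Zc by (simp add: \<delta>_def)
    also have "\<dots> \<le> \<epsilon>\<^sup>2 * ES d 0" using ES0_ge by (intro mult_left_mono) auto
    finally have "NN d \<epsilon> \<le> n" by (rule NN_le[OF e0])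
    then have "real (NN d \<epsilon>) \<le> real n" by simp
    also have "real n = 1 + 2 * (\<Sum>j=1..d. real (m j))" by (simp add: n_def)
    also have "\<dots> \<le> 1 + 2 * (\<Sum>j=1..d. Y * real j powr (- e))"
      using m_le by (intro add_left_mono mult_left_mono sum_mono) auto
    also have "(\<Sum>j=1..d. Y * real j powr (- e)) \<le> Y * Zs e"
      unfolding Zs_def sum_distrib_left[symmetric]
      using summable_powr[OF e1] Y by (intro mult_left_mono sum_le_suminf) auto
    also have "Y = C1 * \<epsilon> powr (- p)"
    proof -
      have ep2: "\<epsilon> powr 2 = \<epsilon>\<^sup>2" using e0 by simp
      have kd: "\<kappa> * \<delta> = \<kappa> / (2 * Zc) * \<epsilon> powr 2" unfolding ep2 \<delta>_def by simp
      have "Y = (\<kappa> / (2 * Zc) * \<epsilon> powr 2) powr (- q)" unfolding Y_def kd ..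
      also have "\<dots> = (\<kappa> / (2 * Zc)) powr (- q) * (\<epsilon> powr 2) powr (- q)"
        by (rule powr_mult)
      also have "(\<epsilon> powr 2) powr (- q) = \<epsilon> powr (- p)"
        unfolding powr_powr q_def by simp
      finally show ?thesis unfolding C1_def .
    qed
    also have "1 + 2 * (C1 * \<epsilon> powr (- p) * Zs e) \<le> C * \<epsilon> powr (- p)"
    proof -
      have "\<epsilon> powr p \<le> 1" using e0 e1' p by (simp add: powr_le1)
      moreover have "\<epsilon> powr p > 0" using e0 by simp
      ultimately have "1 \<le> \<epsilon> powr (- p)" by (simp add: powr_minus one_le_inverse)
      moreover have "C1 \<ge> 0" "Zs e \<ge> 0" using Zs_nonneg[OF e1] by (auto simp: C1_def)
      ultimately show ?thesis unfolding C_def by (simp add: distrib_right)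
    qed
    finally show ?thesis by simp
  qed
  show ?thesis unfolding SPT_bound_def using p C0 main by (intro conjI exI[of _ C]) auto
qed


lemma UB:
  assumes B0: "Bs > 0" and pM: "p > max (two_over Bs) (2 / (\<sigma> 1 - 1))"
  shows "SPT_bound \<alpha> \<beta> \<sigma> p"
proof -
  have ps0: "p > 2 / (\<sigma> 1 - 1)" using pM by simp
  have p0: "p > 0" using ps0 sigma1 by (smt (verit) divide_pos_pos)
  have ps: "2 / p < \<sigma> 1 - 1" using ps0 p0 sigma1 by (simp add: field_simps)
  obtain b where b: "ereal b < Bs" "b > 2 / p"
  proof (cases "Bs = \<infinity>")
    case True
    show ?thesis by (rule that[of "4 / p"]) (use True p0 in \<open>auto simp: field_simps\<close>)
  next
    case False
    then obtain B where BB: "Bs = ereal B" using B0 by (cases Bs) auto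
    have Bp: "B > 0" using B0 BB by simp
    have "2 / B < p" using pM BB False by (simp add: two_over_def)
    then have "2 / p < B" using Bp p0 by (simp add: field_simps)
    then show ?thesis by (intro that[of "(2 / p + B) / 2"]) (auto simp: BB)
  qed
  have b0: "b > 0" using b(2) p0 by (smt (verit) divide_pos_pos)
  obtain \<kappa> where "\<kappa> > 0" "\<forall>j\<ge>1. r j \<ge> \<kappa> * real j powr b"
    using kappa_exists[OF b(1) b0] by blast
  then show ?thesis using UB_core p0 b(2) ps by blast
qed

lemma LB:
  assumes "SPT_bound \<alpha> \<beta> \<sigma> p"
  shows "p \<ge> 2 / (\<sigma> 1 - 1)" "p > 0" "ereal (2 / p) \<le> Bs"
proof -
  show p1: "p \<ge> 2 / (\<sigma> 1 - 1)" by (rule LB1[OF alpha_pos[of 1] assms]) simp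
  show p0: "p > 0" using p1 sigma1 by (smt (verit) divide_pos_pos)
  show "ereal (2 / p) \<le> Bs" by (rule LB2[OF assms p0])
qed

lemma SPT_iff: "SPT_NOR \<alpha> \<beta> \<sigma> \<longleftrightarrow> Bs > 0"
proof
  assume "SPT_NOR \<alpha> \<beta> \<sigma>"
  then obtain p where p: "SPT_bound \<alpha> \<beta> \<sigma> p" by (auto simp: SPT_NOR_def)
  have "ereal 0 < ereal (2 / p)" using LB(2)[OF p] by simp
  also have "\<dots> \<le> Bs" by (rule LB(3)[OF p])
  finally show "Bs > 0" by (simp add: zero_ereal_def)
next
  assume "Bs > 0"
  then show "SPT_NOR \<alpha> \<beta> \<sigma>" unfolding SPT_NOR_def
    using UB[of "max (two_over Bs) (2 / (\<sigma> 1 - 1)) + 1"] by auto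
qed

lemma p_str:
  assumes B0: "Bs > 0"
  shows "p_str_avg \<alpha> \<beta> \<sigma> = max (two_over Bs) (2 / (\<sigma> 1 - 1))"
proof -
  define M where "M = max (two_over Bs) (2 / (\<sigma> 1 - 1))"
  have low: "M \<le> p" if p: "SPT_bound \<alpha> \<beta> \<sigma> p" for p
  proof -
    have "two_over Bs \<le> p"
    proof (cases "Bs = \<infinity>")
      case True then show ?thesis using LB(2)[OF p] by (simp add: two_over_def)
    next
      case False
      then obtain B where BB: "Bs = ereal B" using B0 by (cases Bs) auto
      have Bp: "B > 0" using B0 BB by simp
      have "2 / p \<le> B" using LB(3)[OF p] BB by simp
      then show ?thesis using Bp LB(2)[OF p] BB by (simp add: two_over_def field_simps)
    qed
    then show ?thesis using LB(1)[OF p] by (simp add: M_def)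
  qed
  have up: "SPT_bound \<alpha> \<beta> \<sigma> (M + e)" if "e > 0" for e
    using UB[OF B0, of "M + e"] that by (simp add: M_def)
  have bdd: "bdd_below {p. SPT_bound \<alpha> \<beta> \<sigma> p}" using low unfolding bdd_below_def by blast
  have "Inf {p. SPT_bound \<alpha> \<beta> \<sigma> p} = M"
  proof (rule antisym)
    show "Inf {p. SPT_bound \<alpha> \<beta> \<sigma> p} \<le> M"
    proof (rule field_le_epsilon)
      fix e :: real assume "e > 0"
      then show "Inf {p. SPT_bound \<alpha> \<beta> \<sigma> p} \<le> M + e"
        using up bdd by (intro cInf_lower) auto
    qed
    show "M \<le> Inf {p. SPT_bound \<alpha> \<beta> \<sigma> p}"
      using up[of 1] low by (intro cInf_greatest) auto
  qed
  then show ?thesis by (simp add: p_str_avg_def M_def)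
qed

end

theorem theorem2p3:
  fixes \<alpha> \<beta> \<sigma> :: "nat \<Rightarrow> real" and c :: real
  assumes alpha_nonneg: "\<forall>j\<ge>1. \<alpha> j \<ge> 0"
    and beta1: "\<beta> 1 \<le> 1"
    and beta_dec: "\<forall>j\<ge>1. \<beta> (Suc j) \<le> \<beta> j"
    and beta_pos: "\<forall>j\<ge>1. \<beta> j > 0"
    and sigma1: "\<sigma> 1 > 1"
    and sigma_inc: "\<forall>j\<ge>1. \<sigma> j \<le> \<sigma> (Suc j)"
    and r1: "\<alpha> 1 / \<beta> 1 > 0"
    and r_inc: "\<forall>j\<ge>1. \<alpha> j / \<beta> j \<le> \<alpha> (Suc j) / \<beta> (Suc j)"
    and c_pos: "c > 0"
    and c_bound: "\<forall>d\<ge>1. (\<Sum>j=1..d. \<alpha> j) \<le> c * real d * \<alpha> d"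
  defines "Bstar \<equiv> liminf (\<lambda>d. ereal (ln (\<alpha> d / \<beta> d) / ln (real d)))"
  shows "(SPT_NOR \<alpha> \<beta> \<sigma> \<longleftrightarrow> Bstar > 0)
    \<and> (Bstar > 0 \<longrightarrow> p_str_avg \<alpha> \<beta> \<sigma> = max (two_over Bstar) (2 / (\<sigma> 1 - 1)))
    \<and> ((\<forall>j\<ge>1. \<alpha> j = 1) \<longrightarrow>
         (SPT_NOR \<alpha> \<beta> \<sigma> \<longleftrightarrow> liminf (\<lambda>d. ereal (ln (1 / \<beta> d) / ln (real d))) > 0))"
proof -
  interpret K: kor2 \<alpha> \<beta> \<sigma> c
    by unfold_locales (use assms in auto)
  have BB: "Bstar = K.Bs" by (simp add: Bstar_def K.Bs_def)
  have part3: "SPT_NOR \<alpha> \<beta> \<sigma> \<longleftrightarrow> liminf (\<lambda>d. ereal (ln (1 / \<beta> d) / ln (real d))) > 0"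
    if a1: "\<forall>j\<ge>1. \<alpha> j = 1"
  proof -
    have "liminf (\<lambda>d. ereal (ln (1 / \<beta> d) / ln (real d))) = K.Bs"
      unfolding K.Bs_def
    proof (rule Liminf_eq)
      show "\<forall>\<^sub>F x in sequentially. ereal (ln (1 / \<beta> x) / ln (real x)) = ereal (ln (\<alpha> x / \<beta> x) / ln (real x))"
        unfolding eventually_sequentially using a1 by (intro exI[of _ 1]) auto
    qed
    then show ?thesis using K.SPT_iff by simp
  qed
  show ?thesis using K.SPT_iff K.p_str part3 unfolding BB by blast
qed

end
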